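(* For every $\varepsilon>0$ there exists $n_0$ such that for all $n\ge n_0$ the following holds. Let $\mathcal F\subseteq 2^{[n]}$ be a family all of whose sets have size in $[n/2-n^{2/3},\,n/2+n^{2/3}]$. If for every $F\in\mathcal F$ we have $\nabla^j_{\mathcal F}(F)\le\varepsilon n^4$ for all $j\ge4$, then $|\mathcal F|\le(4+400\varepsilon)\binom{n}{\lfloor n/2\rfloor}$.
   Context: $\nabla^j_{\mathcal F}(F):=|\{G\in\mathcal F:\ F\subseteq G,\ |G|=|F|+j\}|$. *)

theory Defs
  imports Complex_Main
begin

definition up_degree :: "'a set set \<Rightarrow> nat \<Rightarrow> 'a set \<Rightarrow> nat" where
  "up_degree FF j F = card {G \<in> FF. F \<subseteq> G \<and> card G = card F + j}"

end

theory Submission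
  imports Defs "HOL-Combinatorics.Multiset_Permutations" "HOL-Real_Asymp.Real_Asymp"
begin


lemma choose4_real: "real (m choose 4) = real m*(real m-1)*(real m-2)*(real m-3)/24"
  apply (simp add: binomial_gbinomial gbinomial_pochhammer pochhammer_prod numeral_eq_Suc prod.atLeast0_lessThan_Suc)
  by (simp add: algebra_simps)

lemma analytic:
  "\<exists>n0::nat. \<forall>n\<ge>n0. \<forall>(m::nat) (Js::nat set). finite Js \<longrightarrow>
     real n / 2 - real n powr (2/3) \<le> real m \<longrightarrow>
     (\<forall>j\<in>Js. 4 \<le> j \<and> real j \<le> 2 * real n powr (2/3)) \<longrightarrow>
     real n ^ 4 * (\<Sum>j\<in>Js. 1 / real (m choose j)) \<le> 400"
proof -
  have l1: "((\<lambda>x::real. x^4 / (x - 2 * x powr (2/3) - 6)^4) \<longlongrightarrow> 1) at_top"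
    by real_asymp
  have l2: "((\<lambda>x::real. 2 * x powr (2/3) * 3125 * x^4 / (x/2 - x powr (2/3))^5) \<longlongrightarrow> 0) at_top"
    by real_asymp
  have e1: "eventually (\<lambda>x::real. x^4 / (x - 2 * x powr (2/3) - 6)^4 < 1.03) at_top"
    by (rule order_tendstoD(2)[OF l1]) simp
  have e2: "eventually (\<lambda>x::real. 2 * x powr (2/3) * 3125 * x^4 / (x/2 - x powr (2/3))^5 < 1) at_top"
    by (rule order_tendstoD(2)[OF l2]) simp
  have ev1: "eventually (\<lambda>x::real. 384 * x^4 / (x - 2 * x powr (2/3) - 6)^4 + 2 * x powr (2/3) * 3125 * x^4 / (x/2 - x powr (2/3))^5 \<le> 399) at_top"
    using e1 e2 by eventually_elim auto
  have ev2: "eventually (\<lambda>x::real. 4 * x powr (2/3) + 10 \<le> x/2 - x powr (2/3)) at_top"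
    by real_asymp
  have "eventually (\<lambda>x::real. (384 * x^4 / (x - 2 * x powr (2/3) - 6)^4 + 2 * x powr (2/3) * 3125 * x^4 / (x/2 - x powr (2/3))^5 \<le> 399) \<and> (4 * x powr (2/3) + 10 \<le> x/2 - x powr (2/3)) \<and> x \<ge> 1) at_top"
    using ev1 ev2 eventually_ge_at_top[of "1::real"] by eventually_elim auto
  from eventually_compose_filterlim[OF this filterlim_real_sequentially]
  obtain n0 where n0: "\<And>n. n \<ge> n0 \<Longrightarrow> (384 * real n^4 / (real n - 2 * real n powr (2/3) - 6)^4 + 2 * real n powr (2/3) * 3125 * real n^4 / (real n/2 - real n powr (2/3))^5 \<le> 399) \<and> (4 * real n powr (2/3) + 10 \<le> real n/2 - real n powr (2/3)) \<and> real n \<ge> 1"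
    unfolding eventually_sequentially by blast
  show ?thesis
  proof (intro exI allI impI)
    fix n m :: nat and Js :: "nat set"
    assume nn: "n \<ge> n0" and fin: "finite Js" and mb: "real n / 2 - real n powr (2/3) \<le> real m"
      and Jb: "\<forall>j\<in>Js. 4 \<le> j \<and> real j \<le> 2 * real n powr (2/3)"
    define x where "x = real n"
    define t where "t = real n powr (2/3)"
    have B1: "384 * x^4 / (x - 2*t - 6)^4 + 2 * t * 3125 * x^4 / (x/2 - t)^5 \<le> 399"
      and B2: "4 * t + 10 \<le> x/2 - t" and x1: "x \<ge> 1"
      using n0[OF nn] unfolding x_def t_def by auto
    have t0: "t \<ge> 0" unfolding t_def by simp
    define N where "N = nat \<lfloor>2 * t\<rfloor>"
    have Nle: "real N \<le> 2 * t" unfolding N_def using t0 by linarith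
    have mx: "x/2 - t \<le> real m" using mb unfolding x_def t_def .
    have sub: "Js \<subseteq> insert 4 {5..N}"
    proof
      fix j assume "j \<in> Js"
      with Jb have "4 \<le> j" "real j \<le> 2 * t" unfolding t_def by auto
      then have "j \<le> N" unfolding N_def by linarith
      with \<open>4 \<le> j\<close> show "j \<in> insert 4 {5..N}" by auto
    qed
    have m10: "real m \<ge> 10" using mx B2 t0 by linarith
    have pos: "\<And>j. j \<le> m \<Longrightarrow> real (m choose j) > 0" by simp
    have "(\<Sum>j\<in>Js. 1 / real (m choose j)) \<le> (\<Sum>j\<in>insert 4 {5..N}. 1 / real (m choose j))"
      by (rule sum_mono2) (auto simp: sub)
    also have "\<dots> = 1 / real (m choose 4) + (\<Sum>j\<in>{5..N}. 1 / real (m choose j))"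
      by simp
    also have "(\<Sum>j\<in>{5..N}. 1 / real (m choose j)) \<le> (\<Sum>j\<in>{5..N}. 3125 / (x/2 - t)^5)"
    proof (rule sum_mono)
      fix j assume j: "j \<in> {5..N}"
      then have "real j \<le> 2 * t" using Nle by auto
      then have "2 * j \<le> m" using mx B2 by linarith
      then have "m choose 5 \<le> m choose j" using j by (intro binomial_mono) auto
      moreover have "(real m / real 5) ^ 5 \<le> real (m choose 5)"
        using m10 by (intro binomial_ge_n_over_k_pow_k) auto
      ultimately have "(real m / 5) ^ 5 \<le> real (m choose j)" by simp
      moreover have "((x/2 - t) / 5) ^ 5 \<le> (real m / 5) ^ 5"
        using mx B2 t0 by (intro power_mono) auto
      ultimately have c1: "((x/2 - t) / 5) ^ 5 \<le> real (m choose j)" by linarith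
      have "(x/2 - t) > 0" using B2 t0 by linarith
      then have p: "((x/2 - t) / 5) ^ 5 > 0" by simp
      then have "real (m choose j) > 0" using c1 by linarith
      then have "1 / real (m choose j) \<le> 1 / ((x/2 - t) / 5) ^ 5"
        using c1 p by (intro divide_left_mono) auto
      also have "\<dots> = 3125 / (x/2 - t)^5" by (simp add: power_divide)
      finally show "1 / real (m choose j) \<le> 3125 / (x/2 - t)^5" .
    qed
    also have "(\<Sum>j\<in>{5..N}. 3125 / (x/2 - t)^5) \<le> 2 * t * 3125 / (x/2 - t)^5"
    proof -
      have "card {5..N} \<le> N" by simp
      then have "real (card {5..N}) \<le> 2 * t" using Nle by linarith
      moreover have "(x/2 - t) > 0" using B2 t0 by linarith
      ultimately show ?thesis by (simp add: divide_right_mono)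
    qed
    also have "1 / real (m choose 4) \<le> 384 / (x - 2*t - 6)^4"
    proof -
      have "((x - 2*t - 6)/2)^4 \<le> (real m - 3)^4" using mx B2 t0 by (intro power_mono) auto
      also have "(real m - 3)^4 \<le> real m*(real m-1)*(real m-2)*(real m-3)"
      proof -
        have "(real m - 3)^4 = (real m - 3)*(real m - 3)*(real m - 3)*(real m - 3)" by (simp add: power4_eq_xxxx)
        also have "\<dots> \<le> real m*(real m-1)*(real m-2)*(real m-3)"
          using m10 by (intro mult_mono) auto
        finally show ?thesis .
      qed
      finally have le: "(x - 2*t - 6)^4 / 384 \<le> real (m choose 4)" by (simp add: choose4_real power_divide)
      have "(x - 2*t - 6) > 0" using B2 t0 by linarith
      then have p: "(x - 2*t - 6)^4 / 384 > 0" by simp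
      then have "real (m choose 4) > 0" using le by linarith
      then have "1 / real (m choose 4) \<le> 1 / ((x - 2*t - 6)^4 / 384)"
        using le p by (intro divide_left_mono) auto
      then show ?thesis by simp
    qed
    finally have S: "(\<Sum>j\<in>Js. 1 / real (m choose j)) \<le> 384 / (x - 2*t - 6)^4 + 2 * t * 3125 / (x/2 - t)^5"
      by simp
    have "x^4 * (\<Sum>j\<in>Js. 1 / real (m choose j)) \<le> x^4 * (384 / (x - 2*t - 6)^4 + 2 * t * 3125 / (x/2 - t)^5)"
      using S by (intro mult_left_mono) auto
    also have "\<dots> = 384 * x^4 / (x - 2*t - 6)^4 + 2 * t * 3125 * x^4 / (x/2 - t)^5"
      by (simp add: algebra_simps)
    finally show "real n ^ 4 * (\<Sum>j\<in>Js. 1 / real (m choose j)) \<le> 400"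
      using B1 unfolding x_def by linarith
  qed
qed


lemma split_count:
  assumes fin: "finite A" and FA: "F \<subseteq> A"
  shows "card {xs \<in> permutations_of_set A. set (take (card F) xs) = F \<and> P (take (card F) xs) \<and> Q (drop (card F) xs)}
       = card {ys \<in> permutations_of_set F. P ys} * card {zs \<in> permutations_of_set (A - F). Q zs}"
proof -
  let ?k = "card F"
  let ?L = "{ys \<in> permutations_of_set F. P ys}"
  let ?R = "{zs \<in> permutations_of_set (A - F). Q zs}"
  let ?S = "{xs \<in> permutations_of_set A. set (take (card F) xs) = F \<and> P (take (card F) xs) \<and> Q (drop (card F) xs)}"
  have finF: "finite F" using fin FA finite_subset by blast
  have lenL: "length ys = ?k" if "ys \<in> ?L" for ys
    using that by (auto dest: length_finite_permutations_of_set)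
  have inj: "inj_on (\<lambda>(ys, zs). ys @ zs) (?L \<times> ?R)"
  proof (rule inj_onI)
    fix u v assume u: "u \<in> ?L \<times> ?R" and v: "v \<in> ?L \<times> ?R"
      and e: "(\<lambda>(ys, zs). ys @ zs) u = (\<lambda>(ys, zs). ys @ zs) v"
    obtain ys zs where u': "u = (ys, zs)" by force
    obtain ys' zs' where v': "v = (ys', zs')" by force
    have "length ys = length ys'" using u v u' v' lenL by auto
    then show "u = v" using e u' v' by simp
  qed
  have img: "(\<lambda>(ys, zs). ys @ zs) ` (?L \<times> ?R) = ?S"
  proof (rule set_eqI, rule iffI)
    fix xs assume "xs \<in> (\<lambda>(ys, zs). ys @ zs) ` (?L \<times> ?R)"
    then obtain ys zs where xs: "xs = ys @ zs" and ys: "ys \<in> ?L" and zs: "zs \<in> ?R" by auto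
    have l: "length ys = ?k" using lenL ys by blast
    from ys zs have "set ys = F" "distinct ys" "set zs = A - F" "distinct zs" "P ys" "Q zs"
      by (auto simp: permutations_of_set_def)
    then show "xs \<in> ?S" using xs l FA by (auto simp: permutations_of_set_def)
  next
    fix xs assume xs: "xs \<in> ?S"
    then have d: "distinct xs" and s: "set xs = A" and t: "set (take ?k xs) = F"
      and p: "P (take ?k xs)" and q: "Q (drop ?k xs)"
      by (auto simp: permutations_of_set_def)
    have "set (drop ?k xs) = A - F"
    proof -
      have "set xs = set (take ?k xs) \<union> set (drop ?k xs)"
        by (metis set_append append_take_drop_id)
      moreover have "set (take ?k xs) \<inter> set (drop ?k xs) = {}"
        using d by (metis distinct_append append_take_drop_id)
      ultimately show ?thesis using s t by blast
    qed
    then have "take ?k xs \<in> ?L" "drop ?k xs \<in> ?R"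
      using d t p q by (auto simp: permutations_of_set_def)
    then show "xs \<in> (\<lambda>(ys, zs). ys @ zs) ` (?L \<times> ?R)"
      by (intro image_eqI[of _ _ "(take ?k xs, drop ?k xs)"]) auto
  qed
  have "card ?S = card (?L \<times> ?R)" using card_image[OF inj] img by simp
  also have "\<dots> = card ?L * card ?R" by (simp add: card_cartesian_product)
  finally show ?thesis .
qed

lemma count_through:
  assumes fin: "finite A" and FA: "F \<subseteq> A"
  shows "card {xs \<in> permutations_of_set A. set (take (card F) xs) = F} = fact (card F) * fact (card A - card F)"
proof -
  have finF: "finite F" using fin FA finite_subset by blast
  have "card {xs \<in> permutations_of_set A. set (take (card F) xs) = F}
     = card {xs \<in> permutations_of_set A. set (take (card F) xs) = F \<and> (\<lambda>_. True) (take (card F) xs) \<and> (\<lambda>_. True) (drop (card F) xs)}"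
    by simp
  also have "\<dots> = card {ys \<in> permutations_of_set F. True} * card {zs \<in> permutations_of_set (A - F). True}"
    by (rule split_count[OF fin FA])
  also have "\<dots> = fact (card F) * fact (card A - card F)"
    using fin finF FA by (simp add: card_Diff_subset)
  finally show ?thesis .
qed

lemma sum_card_swap:
  assumes "finite A" "finite B"
  shows "(\<Sum>a\<in>A. card {b\<in>B. R a b}) = (\<Sum>b\<in>B. card {a\<in>A. R a b})"
proof -
  have "(\<Sum>a\<in>A. card {b\<in>B. R a b}) = (\<Sum>a\<in>A. \<Sum>b\<in>B. if R a b then 1 else 0)"
    using assms by (simp add: sum.inter_filter[symmetric])
  also have "\<dots> = (\<Sum>b\<in>B. \<Sum>a\<in>A. if R a b then 1 else 0)" by (rule sum.swap)
  also have "\<dots> = (\<Sum>b\<in>B. card {a\<in>A. R a b})"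
    using assms by (simp add: sum.inter_filter[symmetric])
  finally show ?thesis .
qed

lemma chain_props:
  assumes "xs \<in> permutations_of_set A" "finite A"
  shows "length xs = card A" "distinct xs" "set xs = A"
    "\<And>k. k \<le> card A \<Longrightarrow> card (set (take k xs)) = k"
    "\<And>a b. a \<le> b \<Longrightarrow> set (take a xs) \<subseteq> set (take b xs)"
    "\<And>k. set (take k xs) \<inter> set (drop k xs) = {}"
proof -
  show l: "length xs = card A" using assms by (simp add: length_finite_permutations_of_set)
  show d: "distinct xs" "set xs = A" using assms by (auto simp: permutations_of_set_def)
  show "\<And>k. k \<le> card A \<Longrightarrow> card (set (take k xs)) = k"
    using d l by (simp add: distinct_card)
  show "\<And>a b. a \<le> b \<Longrightarrow> set (take a xs) \<subseteq> set (take b xs)"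
    by (simp add: set_take_subset_set_take)
  show "\<And>k. set (take k xs) \<inter> set (drop k xs) = {}"
    using d by (metis distinct_append append_take_drop_id)
qed

lemma comb_bound:
  fixes FF :: "'a set set" and K :: real
  assumes fin: "finite A" and FFA: "FF \<subseteq> Pow A" and K0: "K \<ge> 0"
  and KB: "\<forall>F\<in>FF. (\<Sum>G\<in>{G\<in>FF. F \<subseteq> G \<and> card F + 4 \<le> card G}. 1 / real (card A - card F choose (card G - card F))) \<le> K"
  shows "(\<Sum>F\<in>FF. real (fact (card F) * fact (card A - card F))) \<le> (4 + K) * fact (card A)"
proof -
  define n where "n = card A"
  define P where "P = permutations_of_set A"
  define S where "S F = {G\<in>FF. F \<subseteq> G \<and> card F + 4 \<le> card G}" for F
  define ch where "ch \<sigma> = {F\<in>FF. set (take (card F) \<sigma>) = F}" for \<sigma>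
  define M where "M F = {\<sigma>\<in>P. set (take (card F) \<sigma>) = F \<and> (\<forall>i<card F. set (take i \<sigma>) \<notin> FF)}" for F
  define e where "e F \<sigma> = card {G\<in>S F. set (take (card G) \<sigma>) = G}" for F \<sigma>
  have finFF: "finite FF" using fin FFA by (meson finite_Pow_iff finite_subset)
  have finP: "finite P" unfolding P_def by simp
  have cardP: "card P = fact n" unfolding P_def n_def using fin by simp
  have finS: "finite (S F)" for F unfolding S_def using finFF by simp
  have cardFle: "card F \<le> n" if "F \<in> FF" for F
    using that FFA fin unfolding n_def by (meson PowD card_mono subsetD)
  note cp = chain_props[OF _ fin, folded P_def n_def]
  have eq1: "(\<Sum>F\<in>FF. fact (card F) * fact (n - card F)) = (\<Sum>\<sigma>\<in>P. card (ch \<sigma>))"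
  proof -
    have "(\<Sum>F\<in>FF. fact (card F) * fact (n - card F)) = (\<Sum>F\<in>FF. card {\<sigma>\<in>P. set (take (card F) \<sigma>) = F})"
      using count_through[OF fin] FFA unfolding P_def n_def by (intro sum.cong) auto
    also have "\<dots> = (\<Sum>\<sigma>\<in>P. card (ch \<sigma>))"
      unfolding ch_def by (rule sum_card_swap[OF finFF finP])
    finally show ?thesis .
  qed
  have le2: "card (ch \<sigma>) \<le> 4 + (\<Sum>F\<in>FF. if \<sigma> \<in> M F then e F \<sigma> else 0)" if sP: "\<sigma> \<in> P" for \<sigma>
  proof (cases "ch \<sigma> = {}")
    case True then show ?thesis by simp
  next
    case False
    have finch: "finite (ch \<sigma>)" unfolding ch_def using finFF by simp
    define k0 where "k0 = Min (card ` ch \<sigma>)"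
    have "k0 \<in> card ` ch \<sigma>" unfolding k0_def using False finch by (intro Min_in) auto
    then obtain F0 where F0: "F0 \<in> ch \<sigma>" and ck0: "card F0 = k0" by auto
    have F0min: "card F0 \<le> card G" if "G \<in> ch \<sigma>" for G
      unfolding ck0 k0_def using finch that by (intro Min_le) auto
    have F0FF: "F0 \<in> FF" and F0t: "set (take (card F0) \<sigma>) = F0" using F0 unfolding ch_def by auto
    have inM: "\<sigma> \<in> M F0"
      unfolding M_def
    proof (intro CollectI conjI allI impI sP F0t)
      fix i assume i: "i < card F0"
      show "set (take i \<sigma>) \<notin> FF"
      proof
        assume H: "set (take i \<sigma>) \<in> FF"
        have "i \<le> n" using i cardFle[OF F0FF] by simp
        then have ci: "card (set (take i \<sigma>)) = i" using cp(4)[OF sP] by simp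
        then have "set (take i \<sigma>) \<in> ch \<sigma>" using H unfolding ch_def by simp
        then have "card F0 \<le> i" using F0min ci by force
        then show False using i by simp
      qed
    qed
    have sub: "ch \<sigma> \<subseteq> {G\<in>ch \<sigma>. card G < card F0 + 4} \<union> {G\<in>S F0. set (take (card G) \<sigma>) = G}"
    proof
      fix G assume G: "G \<in> ch \<sigma>"
      show "G \<in> {G\<in>ch \<sigma>. card G < card F0 + 4} \<union> {G\<in>S F0. set (take (card G) \<sigma>) = G}"
      proof (cases "card G < card F0 + 4")
        case True then show ?thesis using G by simp
      next
        case False
        have "F0 \<subseteq> G" using cp(5)[OF sP, of "card F0" "card G"] F0t G False unfolding ch_def by auto
        then show ?thesis using G False unfolding ch_def S_def by auto
      qed
    qed
    have c4: "card {G\<in>ch \<sigma>. card G < card F0 + 4} \<le> 4"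
    proof -
      have inj: "inj_on card {G\<in>ch \<sigma>. card G < card F0 + 4}"
      proof (rule inj_onI)
        fix a b assume a: "a \<in> {G\<in>ch \<sigma>. card G < card F0 + 4}" and b: "b \<in> {G\<in>ch \<sigma>. card G < card F0 + 4}"
          and ab: "card a = card b"
        have "set (take (card a) \<sigma>) = a" "set (take (card b) \<sigma>) = b" using a b unfolding ch_def by auto
        then show "a = b" using ab by metis
      qed
      have "card {G\<in>ch \<sigma>. card G < card F0 + 4} = card (card ` {G\<in>ch \<sigma>. card G < card F0 + 4})"
        using card_image[OF inj] by simp
      also have "\<dots> \<le> card {card F0..<card F0 + 4}"
        by (rule card_mono) (auto dest: F0min)
      finally show ?thesis by simp
    qed
    have "card (ch \<sigma>) \<le> card {G\<in>ch \<sigma>. card G < card F0 + 4} + card {G\<in>S F0. set (take (card G) \<sigma>) = G}"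
      by (rule order_trans[OF card_mono[OF _ sub] card_Un_le]) (use finch finS in auto)
    also have "\<dots> \<le> 4 + e F0 \<sigma>" using c4 unfolding e_def by simp
    also have "e F0 \<sigma> \<le> (\<Sum>F\<in>FF. if \<sigma> \<in> M F then e F \<sigma> else 0)"
      using member_le_sum[of F0 FF "\<lambda>F. if \<sigma> \<in> M F then e F \<sigma> else 0"] inM F0FF finFF by simp
    finally show ?thesis by simp
  qed
  have eq3: "(\<Sum>\<sigma>\<in>P. \<Sum>F\<in>FF. if \<sigma> \<in> M F then e F \<sigma> else 0)
      = (\<Sum>F\<in>FF. \<Sum>G\<in>S F. card {\<sigma>\<in>M F. set (take (card G) \<sigma>) = G})"
  proof -
    have "(\<Sum>\<sigma>\<in>P. \<Sum>F\<in>FF. if \<sigma> \<in> M F then e F \<sigma> else 0) = (\<Sum>F\<in>FF. \<Sum>\<sigma>\<in>P. if \<sigma> \<in> M F then e F \<sigma> else 0)"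
      by (rule sum.swap)
    also have "\<dots> = (\<Sum>F\<in>FF. \<Sum>\<sigma>\<in>M F. e F \<sigma>)"
    proof (rule sum.cong[OF refl])
      fix F
      have "M F = {\<sigma>\<in>P. \<sigma> \<in> M F}" unfolding M_def by auto
      then show "(\<Sum>\<sigma>\<in>P. if \<sigma> \<in> M F then e F \<sigma> else 0) = (\<Sum>\<sigma>\<in>M F. e F \<sigma>)"
        using sum.inter_filter[OF finP, of "e F" "\<lambda>\<sigma>. \<sigma> \<in> M F"] by simp
    qed
    also have "\<dots> = (\<Sum>F\<in>FF. \<Sum>G\<in>S F. card {\<sigma>\<in>M F. set (take (card G) \<sigma>) = G})"
    proof (rule sum.cong[OF refl])
      fix F
      have "finite (M F)" unfolding M_def using finP by simp
      then show "(\<Sum>\<sigma>\<in>M F. e F \<sigma>) = (\<Sum>G\<in>S F. card {\<sigma>\<in>M F. set (take (card G) \<sigma>) = G})"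
        unfolding e_def by (rule sum_card_swap[OF _ finS])
    qed
    finally show ?thesis .
  qed
  have eq4: "real (card {\<sigma>\<in>M F. set (take (card G) \<sigma>) = G}) = real (card (M F)) / real (n - card F choose (card G - card F))"
    if FF: "F \<in> FF" and GS: "G \<in> S F" for F G
  proof -
    define k where "k = card F"
    define j where "j = card G - card F"
    define m where "m = n - k"
    define good where "good ys = (\<forall>i<length ys. set (take i ys) \<notin> FF)" for ys
    have FG: "F \<subseteq> G" and GFF: "G \<in> FF" and kj: "card G = k + j" using GS unfolding S_def k_def j_def by auto
    have FA: "F \<subseteq> A" and GA: "G \<subseteq> A" using FF GFF FFA by auto
    have finG: "finite G" using GA fin finite_subset by blast
    have cGF: "card (G - F) = j" using FG finG kj unfolding k_def by (simp add: card_Diff_subset finite_subset)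
    have cAF: "card (A - F) = m" using FA fin unfolding m_def n_def k_def by (simp add: card_Diff_subset finite_subset)
    have jm: "j \<le> m" using cardFle[OF GFF] kj unfolding m_def by simp
    have gooddef: "good (take k \<sigma>) = (\<forall>i<k. set (take i \<sigma>) \<notin> FF)" if "\<sigma> \<in> P" for \<sigma>
    proof -
      have "length (take k \<sigma>) = k" using cp(1)[OF that] cardFle[OF FF] unfolding k_def by simp
      then show ?thesis unfolding good_def by (auto simp: min_def)
    qed
    have set1: "{\<sigma>\<in>M F. set (take (card G) \<sigma>) = G} =
       {xs \<in> P. set (take k xs) = F \<and> good (take k xs) \<and> (\<lambda>zs. set (take j zs) = G - F) (drop k xs)}"
    proof (rule set_eqI)
      fix xs
      show "xs \<in> {\<sigma>\<in>M F. set (take (card G) \<sigma>) = G} \<longleftrightarrow>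
         xs \<in> {xs \<in> P. set (take k xs) = F \<and> good (take k xs) \<and> (\<lambda>zs. set (take j zs) = G - F) (drop k xs)}"
      proof (cases "xs \<in> P \<and> set (take k xs) = F")
        case True
        then have xP: "xs \<in> P" and tk: "set (take k xs) = F" by auto
        have un: "set (take (card G) xs) = F \<union> set (take j (drop k xs))"
          using tk kj by (simp add: take_add)
        have dj: "F \<inter> set (take j (drop k xs)) = {}"
          using cp(6)[OF xP, of k] tk set_take_subset[of j "drop k xs"] by blast
        have "set (take (card G) xs) = G \<longleftrightarrow> set (take j (drop k xs)) = G - F"
          using un dj FG by blast
        then show ?thesis using gooddef[OF xP] True unfolding M_def k_def by auto
      next
        case False
        then show ?thesis unfolding M_def k_def by auto
      qed
    qed
    have setM: "M F = {xs \<in> P. set (take k xs) = F \<and> good (take k xs) \<and> (\<lambda>_. True) (drop k xs)}"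
      unfolding M_def k_def using gooddef unfolding k_def by auto
    have c1: "card {\<sigma>\<in>M F. set (take (card G) \<sigma>) = G} = card {ys \<in> permutations_of_set F. good ys} * (fact j * fact (m - j))"
    proof -
      have "card {\<sigma>\<in>M F. set (take (card G) \<sigma>) = G} = card {ys \<in> permutations_of_set F. good ys} * card {zs \<in> permutations_of_set (A - F). set (take j zs) = G - F}"
        unfolding set1 P_def k_def by (rule split_count[OF fin FA])
      also have "card {zs \<in> permutations_of_set (A - F). set (take j zs) = G - F} = fact j * fact (m - j)"
        using count_through[of "A - F" "G - F"] fin FG GA cGF cAF by auto
      finally show ?thesis .
    qed
    have c2: "card (M F) = card {ys \<in> permutations_of_set F. good ys} * fact m"
    proof -
      have "card (M F) = card {ys \<in> permutations_of_set F. good ys} * card {zs \<in> permutations_of_set (A - F). True}"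
        unfolding setM P_def k_def by (rule split_count[OF fin FA])
      then show ?thesis using cAF fin by simp
    qed
    have bf: "fact j * fact (m - j) * (m choose j) = (fact m :: nat)" using binomial_fact_lemma[OF jm] .
    have bpos: "m choose j > 0" using jm by simp
    have "real (card (M F)) = real (card {\<sigma>\<in>M F. set (take (card G) \<sigma>) = G}) * real (m choose j)"
      unfolding c1 c2 bf[symmetric] by (simp add: algebra_simps)
    then show ?thesis using bpos unfolding m_def k_def j_def by (simp add: field_simps)
  qed
  have le5: "real (\<Sum>G\<in>S F. card {\<sigma>\<in>M F. set (take (card G) \<sigma>) = G}) \<le> real (card (M F)) * K"
    if FF: "F \<in> FF" for F
  proof -
    have "real (\<Sum>G\<in>S F. card {\<sigma>\<in>M F. set (take (card G) \<sigma>) = G})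
        = (\<Sum>G\<in>S F. real (card (M F)) * (1 / real (n - card F choose (card G - card F))))"
      unfolding of_nat_sum using eq4[OF FF] by (intro sum.cong) auto
    also have "\<dots> = real (card (M F)) * (\<Sum>G\<in>S F. 1 / real (n - card F choose (card G - card F)))"
      by (simp add: sum_distrib_left)
    also have "\<dots> \<le> real (card (M F)) * K"
      using KB FF unfolding S_def n_def by (intro mult_left_mono) auto
    finally show ?thesis .
  qed
  have le6: "(\<Sum>F\<in>FF. card (M F)) \<le> fact n"
  proof -
    have "(\<Sum>F\<in>FF. card (M F)) = (\<Sum>F\<in>FF. card {\<sigma>\<in>P. \<sigma> \<in> M F})"
      unfolding M_def by (intro sum.cong) auto
    also have "\<dots> = (\<Sum>\<sigma>\<in>P. card {F\<in>FF. \<sigma> \<in> M F})" by (rule sum_card_swap[OF finFF finP])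
    also have "\<dots> \<le> (\<Sum>\<sigma>\<in>P. 1)"
    proof (rule sum_mono)
      fix \<sigma> assume "\<sigma> \<in> P"
      have "\<forall>a\<in>{F\<in>FF. \<sigma> \<in> M F}. \<forall>b\<in>{F\<in>FF. \<sigma> \<in> M F}. a = b"
      proof (intro ballI)
        fix a b assume a: "a \<in> {F\<in>FF. \<sigma> \<in> M F}" and b: "b \<in> {F\<in>FF. \<sigma> \<in> M F}"
        have ta: "set (take (card a) \<sigma>) = a" "\<forall>i<card a. set (take i \<sigma>) \<notin> FF" "a \<in> FF"
          using a unfolding M_def mem_Collect_eq by blast+
        have tb: "set (take (card b) \<sigma>) = b" "\<forall>i<card b. set (take i \<sigma>) \<notin> FF" "b \<in> FF"
          using b unfolding M_def mem_Collect_eq by blast+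
        show "a = b"
        proof (cases "card a = card b")
          case True
          have "a = set (take (card a) \<sigma>)" by (rule ta(1)[symmetric])
          also have "\<dots> = set (take (card b) \<sigma>)" using True by (rule arg_cong)
          also have "\<dots> = b" by (rule tb(1))
          finally show ?thesis .
        next
          case False
          then consider "card a < card b" | "card b < card a" by linarith
          then show ?thesis
          proof cases
            case 1 then have "set (take (card a) \<sigma>) \<notin> FF" using tb(2) by blast
            then show ?thesis using ta(1,3) by simp
          next
            case 2 then have "set (take (card b) \<sigma>) \<notin> FF" using ta(2) by blast
            then show ?thesis using tb(1,3) by simp
          qed
        qed
      qed
      then show "card {F\<in>FF. \<sigma> \<in> M F} \<le> 1"
        using finFF by (simp add: card_le_Suc0_iff_eq)
    qed
    also have "\<dots> = fact n" using cardP by simp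
    finally show ?thesis .
  qed
  have "(\<Sum>F\<in>FF. real (fact (card F) * fact (card A - card F))) = real (\<Sum>\<sigma>\<in>P. card (ch \<sigma>))"
  proof -
    have "real (\<Sum>F\<in>FF. fact (card F) * fact (n - card F)) = real (\<Sum>\<sigma>\<in>P. card (ch \<sigma>))"
      using eq1 by simp
    then show ?thesis unfolding n_def of_nat_sum by simp
  qed
  also have "\<dots> \<le> real (\<Sum>\<sigma>\<in>P. 4 + (\<Sum>F\<in>FF. if \<sigma> \<in> M F then e F \<sigma> else 0))"
    using le2 by (intro of_nat_mono sum_mono) auto
  also have "\<dots> = 4 * real (fact n) + real (\<Sum>F\<in>FF. \<Sum>G\<in>S F. card {\<sigma>\<in>M F. set (take (card G) \<sigma>) = G})"
    unfolding sum.distrib eq3 using cardP by simp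
  also have "real (\<Sum>F\<in>FF. \<Sum>G\<in>S F. card {\<sigma>\<in>M F. set (take (card G) \<sigma>) = G}) \<le> (\<Sum>F\<in>FF. real (card (M F)) * K)"
    unfolding of_nat_sum[of _ FF] using le5 by (intro sum_mono) (simp add: of_nat_sum)
  also have "\<dots> = real (\<Sum>F\<in>FF. card (M F)) * K" by (simp add: sum_distrib_right)
  also have "\<dots> \<le> real (fact n) * K" 
  proof -
    have "real (\<Sum>F\<in>FF. card (M F)) \<le> real (fact n)" using le6 of_nat_le_iff by blast
    then show ?thesis using K0 by (rule mult_right_mono)
  qed
  finally show ?thesis unfolding n_def by (simp add: algebra_simps)
qed


theorem lemma2p5:
  "\<forall>\<epsilon>::real. \<epsilon> > 0 \<longrightarrow> (\<exists>n0::nat. \<forall>n\<ge>n0. \<forall>FF :: nat set set.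
     FF \<subseteq> Pow {1..n} \<longrightarrow>
     (\<forall>F\<in>FF. real n / 2 - real n powr (2/3) \<le> real (card F) \<and>
               real (card F) \<le> real n / 2 + real n powr (2/3)) \<longrightarrow>
     (\<forall>F\<in>FF. \<forall>j\<ge>4. real (up_degree FF j F) \<le> \<epsilon> * real n ^ 4) \<longrightarrow>
     real (card FF) \<le> (4 + 400 * \<epsilon>) * real (n choose (n div 2)))"
proof (intro allI impI)
  fix \<epsilon> :: real assume eps: "\<epsilon> > 0"
  obtain n0 where n0: "\<And>n m Js. n \<ge> n0 \<Longrightarrow> finite Js \<Longrightarrow>
     real n / 2 - real n powr (2/3) \<le> real m \<Longrightarrow>
     (\<forall>j\<in>Js. 4 \<le> j \<and> real j \<le> 2 * real n powr (2/3)) \<Longrightarrow>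
     real n ^ 4 * (\<Sum>j\<in>Js. 1 / real (m choose j)) \<le> 400"
    using analytic by blast
  show "\<exists>n0::nat. \<forall>n\<ge>n0. \<forall>FF :: nat set set.
     FF \<subseteq> Pow {1..n} \<longrightarrow>
     (\<forall>F\<in>FF. real n / 2 - real n powr (2/3) \<le> real (card F) \<and>
               real (card F) \<le> real n / 2 + real n powr (2/3)) \<longrightarrow>
     (\<forall>F\<in>FF. \<forall>j\<ge>4. real (up_degree FF j F) \<le> \<epsilon> * real n ^ 4) \<longrightarrow>
     real (card FF) \<le> (4 + 400 * \<epsilon>) * real (n choose (n div 2))"
  proof (intro exI[of _ n0] allI impI)
    fix n :: nat and FF :: "nat set set"
    assume nn: "n \<ge> n0" and sub: "FF \<subseteq> Pow {1..n}"
      and band: "\<forall>F\<in>FF. real n / 2 - real n powr (2/3) \<le> real (card F) \<and>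
               real (card F) \<le> real n / 2 + real n powr (2/3)"
      and deg: "\<forall>F\<in>FF. \<forall>j\<ge>4. real (up_degree FF j F) \<le> \<epsilon> * real n ^ 4"
    define A where "A = {1..n}"
    have finA: "finite A" and cA: "card A = n" unfolding A_def by auto
    have finFF: "finite FF" using sub unfolding A_def by (meson finite_Pow_iff finite_atLeastAtMost finite_subset)
    have KB: "\<forall>F\<in>FF. (\<Sum>G\<in>{G\<in>FF. F \<subseteq> G \<and> card F + 4 \<le> card G}. 1 / real (card A - card F choose (card G - card F))) \<le> 400 * \<epsilon>"
    proof
      fix F assume F: "F \<in> FF"
      define S where "S = {G\<in>FF. F \<subseteq> G \<and> card F + 4 \<le> card G}"
      define h where "h G = card G - card F" for G :: "nat set"
      define m where "m = n - card F"
      define f where "f j = 1 / real (m choose j)" for j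
      have finS: "finite S" unfolding S_def using finFF by simp
      have cFn: "card F \<le> n" using F sub unfolding A_def
        by (metis PowD card_atLeastAtMost card_mono diff_Suc_1 finite_atLeastAtMost subsetD)
      have "(\<Sum>G\<in>S. f (h G)) = (\<Sum>j\<in>h ` S. \<Sum>G\<in>{G\<in>S. h G = j}. f (h G))"
        by (rule sum.image_gen[OF finS])
      also have "\<dots> = (\<Sum>j\<in>h ` S. real (card {G\<in>S. h G = j}) * f j)"
        by (intro sum.cong) auto
      also have "\<dots> \<le> (\<Sum>j\<in>h ` S. (\<epsilon> * real n ^ 4) * f j)"
      proof (rule sum_mono)
        fix j assume j: "j \<in> h ` S"
        then have j4: "4 \<le> j" unfolding S_def h_def by auto
        have "{G\<in>S. h G = j} = {G \<in> FF. F \<subseteq> G \<and> card G = card F + j}"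
          unfolding S_def h_def using j4 by auto
        then have "real (card {G\<in>S. h G = j}) \<le> \<epsilon> * real n ^ 4"
          using deg F j4 unfolding up_degree_def by auto
        moreover have "f j \<ge> 0" unfolding f_def by simp
        ultimately show "real (card {G\<in>S. h G = j}) * f j \<le> (\<epsilon> * real n ^ 4) * f j"
          by (rule mult_right_mono)
      qed
      also have "\<dots> = \<epsilon> * (real n ^ 4 * (\<Sum>j\<in>h ` S. f j))"
        unfolding sum_distrib_left by (simp add: mult.assoc)
      also have "\<dots> \<le> \<epsilon> * 400"
      proof (rule mult_left_mono)
        show "real n ^ 4 * (\<Sum>j\<in>h ` S. f j) \<le> 400"
          unfolding f_def
        proof (rule n0[OF nn])
          show "finite (h ` S)" using finS by simp
          show "real n / 2 - real n powr (2/3) \<le> real m"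
            using band F cFn unfolding m_def by (auto simp: of_nat_diff)
          show "\<forall>j\<in>h ` S. 4 \<le> j \<and> real j \<le> 2 * real n powr (2 / 3)"
          proof
            fix j assume "j \<in> h ` S"
            then obtain G where G: "G \<in> S" and jG: "j = h G" by auto
            have GFF: "G \<in> FF" and le: "card F + 4 \<le> card G" using G unfolding S_def by auto
            have "real j = real (card G) - real (card F)" using le jG unfolding h_def by (simp add: of_nat_diff)
            moreover have "real (card G) \<le> real n / 2 + real n powr (2/3)" using band GFF by blast
            moreover have "real n / 2 - real n powr (2/3) \<le> real (card F)" using band F by blast
            ultimately have "real j \<le> 2 * real n powr (2/3)" by linarith
            then show "4 \<le> j \<and> real j \<le> 2 * real n powr (2 / 3)" using le jG unfolding h_def by simp
          qed
        qed
      qed (use eps in simp)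
      finally show "(\<Sum>G\<in>{G\<in>FF. F \<subseteq> G \<and> card F + 4 \<le> card G}. 1 / real (card A - card F choose (card G - card F))) \<le> 400 * \<epsilon>"
        unfolding S_def h_def f_def m_def cA by (simp add: mult.commute)
    qed
    have main: "(\<Sum>F\<in>FF. real (fact (card F) * fact (card A - card F))) \<le> (4 + 400 * \<epsilon>) * fact (card A)"
      by (rule comb_bound[OF finA sub[folded A_def] _ KB]) (use eps in simp)
    define C where "C = n choose (n div 2)"
    have Cpos: "real C > 0" unfolding C_def by simp
    have low: "real (fact n) / real C \<le> real (fact (card F) * fact (n - card F))" if F: "F \<in> FF" for F
    proof -
      have cFn: "card F \<le> n" using F sub unfolding A_def
        by (metis PowD card_atLeastAtMost card_mono diff_Suc_1 finite_atLeastAtMost subsetD)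
      have bf: "fact (card F) * fact (n - card F) * (n choose card F) = (fact n :: nat)"
        by (rule binomial_fact_lemma[OF cFn])
      have bC: "n choose card F \<le> C" unfolding C_def by (rule binomial_maximum)
      have bpos: "real (n choose card F) > 0" using cFn by simp
      have "real (fact n) / real C \<le> real (fact n) / real (n choose card F)"
        using bC bpos Cpos by (intro divide_left_mono) auto
      also have "\<dots> = real (fact (card F) * fact (n - card F))"
        using bpos by (simp add: bf[symmetric] del: of_nat_fact)
      finally show ?thesis .
    qed
    have "real (card FF) * (real (fact n) / real C) = (\<Sum>F\<in>FF. real (fact n) / real C)"
      by simp
    also have "\<dots> \<le> (\<Sum>F\<in>FF. real (fact (card F) * fact (n - card F)))"
      using low by (intro sum_mono) auto
    also have "\<dots> \<le> (4 + 400 * \<epsilon>) * real (fact n)" using main unfolding cA by simp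
    finally have "real (card FF) * real (fact n) / real C \<le> (4 + 400 * \<epsilon>) * real (fact n)" by simp
    then have "real (card FF) * real (fact n) \<le> (4 + 400 * \<epsilon>) * real (fact n) * real C"
      using Cpos by (simp add: divide_le_eq)
    then have "real (card FF) \<le> (4 + 400 * \<epsilon>) * real C"
      by (simp add: mult.commute mult.left_commute del: of_nat_fact)
    then show "real (card FF) \<le> (4 + 400 * \<epsilon>) * real (n choose (n div 2))" unfolding C_def .
  qed
qed

end
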